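(* Let $X$ be a real random variable and $U$ a continuously distributed random variable with $U\sim\mathrm{Unif}[0,1]$. Let $\mathcal{T}=[a,b]\subseteq[0,1]$. If $U$ is $\mathcal{T}$-independent of $X$, then $F_{X\mid U}(x\mid u)=F_X(x)$ for all $x\in\mathbb{R}$ and almost all $u\in\mathcal{T}$.
   Context: $U$ is $\mathcal{T}$-independent of $X$ if $F_{U\mid X}(\tau\mid x)=F_U(\tau)$ for all $x\in\operatorname{supp}(X)$ and all $\tau\in\mathcal{T}$. Here $F_{X\mid U}(\cdot\mid u)$ is the conditional cdf of $X$ given $U=u$ and $F_X$ is the marginal cdf of $X$. *)

theory Defs
  imports "HOL-Probability.Probability"
begin

definition dist_support :: "'w measure \<Rightarrow> ('w \<Rightarrow> real) \<Rightarrow> real set" where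
  "dist_support M Z = {x. \<forall>e>0. measure (distr M borel Z) (ball x e) > 0}"

text \<open>F is a (version of the) conditional cdf of Y given Z, i.e. F y z = P(Y \<le> y | Z = z):
  for every y, the map z \<mapsto> F y z is Borel measurable and integrable w.r.t. the law
  of Z, and for every Borel set B,
  P(Y \<le> y, Z \<in> B) = integral over B of F y z with respect to the law of Z.\<close>
definition is_cond_cdf ::
  "'w measure \<Rightarrow> ('w \<Rightarrow> real) \<Rightarrow> ('w \<Rightarrow> real) \<Rightarrow> (real \<Rightarrow> real \<Rightarrow> real) \<Rightarrow> bool" where
  "is_cond_cdf M Y Z F \<longleftrightarrow>
     (\<forall>y. F y \<in> borel_measurable borel \<and> integrable (distr M borel Z) (F y) \<and>
        (\<forall>B \<in> sets borel.
           measure M {\<omega> \<in> space M. Y \<omega> \<le> y \<and> Z \<omega> \<in> B}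
             = (\<integral>z. indicator B z * F y z \<partial>(distr M borel Z))))"

end

theory Submission imports Defs begin

lemma emeasure_density_int:
  fixes f :: "'a \<Rightarrow> real"
  assumes ig: "integrable N f" and A: "A \<in> sets N"
  shows "emeasure (density N (\<lambda>u. ennreal (f u))) A = ennreal (\<integral>u. max 0 (f u) * indicator A u \<partial>N)"
proof -
  have fm: "f \<in> borel_measurable N" using ig by auto
  have "emeasure (density N (\<lambda>u. ennreal (f u))) A = (\<integral>\<^sup>+u. ennreal (f u) * indicator A u \<partial>N)"
    using fm A by (simp add: emeasure_density)
  also have "\<dots> = (\<integral>\<^sup>+u. ennreal (max 0 (f u) * indicator A u) \<partial>N)"
    by (intro nn_integral_cong) (auto simp: indicator_def ennreal_neg max_def)
  also have "\<dots> = ennreal (\<integral>u. max 0 (f u) * indicator A u \<partial>N)"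
  proof (rule nn_integral_eq_integral)
    show "integrable N (\<lambda>u. max 0 (f u) * indicator A u)"
      using A ig by (intro integrable_real_mult_indicator integrable_max) auto
  qed (auto simp: indicator_def)
  finally show ?thesis .
qed

lemma ae_zero_tails:
  fixes N :: "real measure" and g :: "real \<Rightarrow> real"
  assumes sN: "sets N = sets borel" and ig: "integrable N g"
    and z: "\<And>t. (\<integral>u. indicator {t<..} u * g u \<partial>N) = 0"
  shows "AE u in N. g u = 0"
proof -
  have gm: "g \<in> borel_measurable N" using ig by auto
  have ign: "integrable N (\<lambda>u. - g u)" using ig by auto
  have sp: "space N = UNIV" using sets_eq_imp_space_eq[OF sN] by simp
  have eqD: "density N (\<lambda>u. ennreal (g u)) = density N (\<lambda>u. ennreal (- g u))"
  proof (rule measure_eqI_lessThan)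
    show "sets (density N (\<lambda>u. ennreal (g u))) = sets borel" using sN by simp
    show "sets (density N (\<lambda>u. ennreal (- g u))) = sets borel" using sN by simp
    fix t
    have At: "{t<..} \<in> sets N" using sN by simp
    show "emeasure (density N (\<lambda>u. ennreal (g u))) {t<..} < \<infinity>"
      using emeasure_density_int[OF ig At] by simp
    have "(\<integral>u. max 0 (g u) * indicator {t<..} u \<partial>N) - (\<integral>u. max 0 (- g u) * indicator {t<..} u \<partial>N)
        = (\<integral>u. max 0 (g u) * indicator {t<..} u - max 0 (- g u) * indicator {t<..} u \<partial>N)"
      using At ig ign by (intro Bochner_Integration.integral_diff[symmetric] integrable_real_mult_indicator integrable_max) auto
    also have "\<dots> = (\<integral>u. indicator {t<..} u * g u \<partial>N)"
      by (intro Bochner_Integration.integral_cong) (auto simp: indicator_def max_def)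
    finally have "(\<integral>u. max 0 (g u) * indicator {t<..} u \<partial>N) = (\<integral>u. max 0 (- g u) * indicator {t<..} u \<partial>N)"
      using z[of t] by simp
    then show "emeasure (density N (\<lambda>u. ennreal (g u))) {t<..} = emeasure (density N (\<lambda>u. ennreal (- g u))) {t<..}"
      using emeasure_density_int[OF ig At] emeasure_density_int[OF ign At] by simp
  qed
  have fin: "integral\<^sup>N N (\<lambda>u. ennreal (g u)) \<noteq> \<infinity>"
  proof -
    have "integral\<^sup>N N (\<lambda>u. ennreal (g u)) = emeasure (density N (\<lambda>u. ennreal (g u))) (space N)"
      using gm by (simp add: emeasure_density)
    also have "\<dots> = ennreal (\<integral>u. max 0 (g u) * indicator (space N) u \<partial>N)"
      using emeasure_density_int[OF ig sets.top] .
    finally show ?thesis by simp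
  qed
  have "AE u in N. ennreal (g u) = ennreal (- g u)"
    using finite_density_unique[of "\<lambda>u. ennreal (g u)" N "\<lambda>u. ennreal (- g u)"] gm fin eqD by auto
  then show ?thesis
    by (rule eventually_mono) (metis ennreal_eq_0_iff ennreal_inj linorder_le_cases neg_0_le_iff_le neg_le_0_iff_le)
qed

lemma ae_support:
  fixes P :: "real measure"
  assumes sP: "sets P = sets borel" and fm: "finite_measure P"
  shows "AE z in P. z \<in> {x. \<forall>e>0. measure P (ball x e) > 0}"
proof -
  define F where "F = {ball x e | x e. e > 0 \<and> measure P (ball x e) = 0}"
  obtain F' where F': "F' \<subseteq> F" "countable F'" "\<Union>F' = \<Union>F"
    using Lindelof[of F] unfolding F_def by auto
  have "(\<Union>S\<in>F'. S) \<in> null_sets P"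
  proof (rule null_sets_UN')
    show "countable F'" by fact
    fix S assume "S \<in> F'"
    then obtain x e where "S = ball x e" "measure P (ball x e) = 0" using F' unfolding F_def by auto
    then show "S \<in> null_sets P"
      using fm sP by (simp add: finite_measure.emeasure_eq_measure null_sets_def)
  qed
  moreover have "{z \<in> space P. z \<notin> {x. \<forall>e>0. measure P (ball x e) > 0}} \<subseteq> \<Union>F'"
  proof
    fix z assume "z \<in> {z \<in> space P. z \<notin> {x. \<forall>e>0. measure P (ball x e) > 0}}"
    then obtain e where "e > 0" "\<not> measure P (ball z e) > 0" by auto
    then have "ball z e \<in> F" unfolding F_def using measure_nonneg[of P "ball z e"] by force
    then show "z \<in> \<Union>F'" using F'(3) \<open>e>0\<close> by (metis UnionI centre_in_ball)
  qed
  ultimately show ?thesis by (intro AE_I') auto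
qed


theorem corollary8:
  fixes M :: "'w measure" and X U :: "'w \<Rightarrow> real"
    and F_UX F_XU :: "real \<Rightarrow> real \<Rightarrow> real" and a b :: real
  assumes "prob_space M"
    and "X \<in> borel_measurable M" and "U \<in> borel_measurable M"
    and "distr M borel U = uniform_measure lborel {0..1}"
    and "0 \<le> a" and "a \<le> b" and "b \<le> 1"
    and "is_cond_cdf M U X F_UX"
    and "is_cond_cdf M X U F_XU"
    and "\<forall>x \<in> dist_support M X. \<forall>\<tau> \<in> {a..b}. F_UX \<tau> x = cdf (distr M borel U) \<tau>"
  shows "\<forall>x::real. AE u in lborel. u \<in> {a..b} \<longrightarrow> F_XU x u = cdf (distr M borel X) x"
proof
  fix x :: real
  interpret P: prob_space M by fact
  note Xm[measurable] = assms(2) and Um[measurable] = assms(3)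
  define PX where "PX = distr M borel X"
  define PU where "PU = distr M borel U"
  define c where "c = cdf PX x"
  have PUeq: "PU = uniform_measure lborel {0..1}" using assms(4) PU_def by simp
  have sPX: "sets PX = sets borel" and sPU: "sets PU = sets borel" by (simp_all add: PX_def PU_def)
  have finPX: "finite_measure PX" unfolding PX_def by (rule P.finite_measure_distr) simp
  have measPU: "measure PU {s<..t} = t - s" if "0 \<le> s" "s \<le> t" "t \<le> 1" for s t
  proof -
    have "{0..1} \<inter> {s<..t} = {s<..t}" using that by auto
    then show ?thesis using that by (simp add: PUeq)
  qed
  have cdfPU: "cdf PU \<tau> = \<tau>" if "0 \<le> \<tau>" "\<tau> \<le> 1" for \<tau>
  proof -
    have "{0..1} \<inter> {..\<tau>} = {0..\<tau>::real}" using that by auto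
    moreover have "min 1 \<tau> = \<tau>" using that(2) by simp
    ultimately show ?thesis using that(1) by (simp add: cdf_def PUeq)
  qed
  have A: "measure M {\<omega> \<in> space M. X \<omega> \<le> x \<and> U \<omega> \<le> \<tau>} = \<tau> * c" if t: "\<tau> \<in> {a..b}" for \<tau>
  proof -
    have "measure M {\<omega> \<in> space M. U \<omega> \<le> \<tau> \<and> X \<omega> \<in> {..x}}
          = (\<integral>z. indicator {..x} z * F_UX \<tau> z \<partial>PX)"
    proof -
      have "{..x} \<in> sets (borel::real measure)" by simp
      then show ?thesis using assms(8) unfolding is_cond_cdf_def PX_def by blast
    qed
    also have "\<dots> = (\<integral>z. indicator {..x} z * \<tau> \<partial>PX)"
    proof (rule integral_cong_AE)
      have eqm: "borel_measurable PX = borel_measurable (borel::real measure)"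
        by (rule measurable_cong_sets[OF sPX refl])
      have Fm[measurable]: "F_UX \<tau> \<in> borel_measurable borel"
        using assms(8) unfolding is_cond_cdf_def by blast
      show "(\<lambda>z. indicator {..x} z * F_UX \<tau> z) \<in> borel_measurable PX"
        unfolding eqm by measurable
      show "(\<lambda>z. indicator {..x} z * \<tau>) \<in> borel_measurable PX"
        unfolding eqm by measurable
      show "AE z in PX. indicator {..x} z * F_UX \<tau> z = indicator {..x} z * \<tau>"
        using ae_support[OF sPX finPX]
      proof (rule eventually_mono)
        fix z assume "z \<in> {x. \<forall>e>0. measure PX (ball x e) > 0}"
        then have "z \<in> dist_support M X" unfolding dist_support_def PX_def by simp
        then have "F_UX \<tau> z = cdf PU \<tau>" using assms(10) t unfolding PU_def by blast
        also have "\<dots> = \<tau>" using cdfPU[of \<tau>] t assms(5,7) by simp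
        finally show "indicator {..x} z * F_UX \<tau> z = indicator {..x} z * \<tau>" by simp
      qed
    qed
    also have "\<dots> = \<tau> * c"
    proof -
      have spX: "space PX = UNIV" by (simp add: PX_def)
      show ?thesis by (simp add: c_def cdf_def spX)
    qed
    finally have r: "measure M {\<omega> \<in> space M. U \<omega> \<le> \<tau> \<and> X \<omega> \<in> {..x}} = \<tau> * c" .
    have eqset: "{\<omega> \<in> space M. X \<omega> \<le> x \<and> U \<omega> \<le> \<tau>} = {\<omega> \<in> space M. U \<omega> \<le> \<tau> \<and> X \<omega> \<in> {..x}}"
      by auto
    show ?thesis unfolding eqset by (rule r)
  qed
  have B: "(\<integral>u. indicator {s<..b} u * F_XU x u \<partial>PU) = c * (b - s)" if s: "a \<le> s" "s \<le> b" for s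
  proof -
    have "(\<integral>u. indicator {s<..b} u * F_XU x u \<partial>PU) = measure M {\<omega> \<in> space M. X \<omega> \<le> x \<and> U \<omega> \<in> {s<..b}}"
    proof -
      have "{s<..b} \<in> sets (borel::real measure)" by simp
      then have "measure M {\<omega> \<in> space M. X \<omega> \<le> x \<and> U \<omega> \<in> {s<..b}} = (\<integral>u. indicator {s<..b} u * F_XU x u \<partial>PU)"
        using assms(9) unfolding is_cond_cdf_def PU_def by blast
      then show ?thesis by simp
    qed
    also have "{\<omega> \<in> space M. X \<omega> \<le> x \<and> U \<omega> \<in> {s<..b}} =
       {\<omega> \<in> space M. X \<omega> \<le> x \<and> U \<omega> \<le> b} - {\<omega> \<in> space M. X \<omega> \<le> x \<and> U \<omega> \<le> s}"
      by auto
    also have "measure M \<dots> = measure M {\<omega> \<in> space M. X \<omega> \<le> x \<and> U \<omega> \<le> b} - measure M {\<omega> \<in> space M. X \<omega> \<le> x \<and> U \<omega> \<le> s}"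
      using s by (intro P.finite_measure_Diff) auto
    also have "\<dots> = c * (b - s)" using A[of b] A[of s] s by (simp add: algebra_simps)
    finally show ?thesis .
  qed
  define g where "g u = indicator {a<..b} u * (F_XU x u - c)" for u
  have iF: "integrable PU (F_XU x)" using assms(9) unfolding is_cond_cdf_def PU_def by blast
  have finPU: "finite_measure PU" unfolding PU_def by (rule P.finite_measure_distr) simp
  have ig: "integrable PU g"
  proof -
    have "integrable PU (\<lambda>u. F_XU x u - c)"
      using iF finPU by (intro Bochner_Integration.integrable_diff) (auto simp: finite_measure.integrable_const)
    from integrable_real_mult_indicator[OF _ this, of "{a<..b}"] sPU
    show ?thesis unfolding g_def by (simp add: mult.commute)
  qed
  have z: "(\<integral>u. indicator {t<..} u * g u \<partial>PU) = 0" for t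
  proof -
    define s where "s = min b (max a t)"
    have s: "a \<le> s" "s \<le> b" using assms(6) by (auto simp: s_def)
    have "(\<integral>u. indicator {t<..} u * g u \<partial>PU) = (\<integral>u. indicator {s<..b} u * F_XU x u - c * indicator {s<..b} u \<partial>PU)"
    proof (intro Bochner_Integration.integral_cong refl)
      fix u
      have key: "(t < u \<and> a < u \<and> u \<le> b) = (s < u \<and> u \<le> b)"
        using assms(6) by (cases "t \<le> a"; cases "t \<le> b") (auto simp: s_def)
      show "indicator {t<..} u * g u = indicator {s<..b} u * F_XU x u - c * indicator {s<..b} u"
      proof (cases "s < u \<and> u \<le> b")
        case True
        then have "t < u" "a < u" "u \<le> b" using key by auto
        then show ?thesis using True by (simp add: g_def algebra_simps)
      next
        case False
        then have "\<not> (t < u \<and> a < u \<and> u \<le> b)" using key by simp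
        then have "indicator {t<..} u * indicator {a<..b} u = (0::real)" by (auto simp: indicator_def)
        moreover have "indicator {s<..b} u = (0::real)" using False by simp
        ultimately show ?thesis unfolding g_def by (metis mult.assoc mult_zero_left mult_zero_right diff_self)
      qed
    qed
    also have "\<dots> = (\<integral>u. indicator {s<..b} u * F_XU x u \<partial>PU) - c * (\<integral>u. indicator {s<..b} u \<partial>PU)"
    proof -
      have sb: "{s<..b} \<in> sets PU" using sPU by simp
      have i1: "integrable PU (\<lambda>u. indicator {s<..b} u * F_XU x u)"
        using integrable_real_mult_indicator[OF sb iF] by (simp add: mult.commute)
      have i2: "integrable PU (\<lambda>u. c * indicator {s<..b} u)"
        using finPU sb by (intro integrable_mult_right integrable_real_indicator)
          (auto simp: finite_measure.emeasure_eq_measure)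
      show ?thesis using Bochner_Integration.integral_diff[OF i1 i2] by simp
    qed
    also have "\<dots> = 0"
    proof -
      have m: "measure PU {s<..b} = b - s" using measPU[of s b] s assms(5,7) by simp
      have spU: "space PU = UNIV" by (simp add: PU_def)
      have e1: "(\<integral>u. indicator {s<..b} u \<partial>PU) = b - s" using m by (simp add: spU)
      show ?thesis unfolding e1 B[OF s] by simp
    qed
    finally show ?thesis .
  qed
  have aeg: "AE u in PU. g u = 0" by (rule ae_zero_tails[OF sPU ig z])
  then have "AE u in lborel. u \<in> {0..1} \<longrightarrow> g u = 0"
    unfolding PUeq by (subst (asm) AE_uniform_measure) auto
  moreover have "AE u in lborel. u \<noteq> a" by (rule AE_lborel_singleton)
  ultimately show "AE u in lborel. u \<in> {a..b} \<longrightarrow> F_XU x u = cdf (distr M borel X) x"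
  proof eventually_elim
    case (elim u)
    then show ?case using assms(5,7) by (auto simp: g_def c_def PX_def indicator_def)
  qed
qed

end
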